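(* Let $n\ge 2$ and let $Q_n$ be the $n$-dimensional discrete binary cube. (a) $crx_1(Q_n)=4$. (b) $crx_2(Q_n)=crx_3(Q_n)=2n$. (c) $crx_k(Q_n)=2^n$ for $2^{n-1}\le k\le 2^n$.
   Context: $Q_n$ has vertex set $\{0,1\}^n$, two vectors adjacent iff they differ in exactly one coordinate. An edge-coloured cycle is rainbow if its edges have distinct colours. For a graph $G$ in which any $k$ vertices lie on a common cycle, $crx_k(G)$ is the minimum number of colours in an edge-colouring of $G$ such that every set of $k$ vertices of $G$ lies in some rainbow cycle. *)

theory Defs
  imports Main
begin

text \<open>A graph is given by a vertex set V and a set E of edges, each edge a 2-element set.\<close>

definition is_cycle :: "'a set set \<Rightarrow> 'a list \<Rightarrow> bool" where
  "is_cycle E vs \<longleftrightarrow> length vs \<ge> 3 \<and> distinct vs \<and>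
     (\<forall>i < length vs. {vs ! i, vs ! ((i + 1) mod length vs)} \<in> E)"

definition cycle_edges :: "'a list \<Rightarrow> 'a set set" where
  "cycle_edges vs = {{vs ! i, vs ! ((i + 1) mod length vs)} | i. i < length vs}"

definition rainbow :: "('a set \<Rightarrow> nat) \<Rightarrow> 'a list \<Rightarrow> bool" where
  "rainbow c vs \<longleftrightarrow> inj_on c (cycle_edges vs)"

definition crx :: "'a set \<Rightarrow> 'a set set \<Rightarrow> nat \<Rightarrow> nat" where
  "crx V E k = (LEAST m. \<exists>c :: 'a set \<Rightarrow> nat. (\<forall>e \<in> E. c e < m) \<and>
      (\<forall>S. S \<subseteq> V \<and> card S = k \<longrightarrow>
         (\<exists>vs. is_cycle E vs \<and> S \<subseteq> set vs \<and> rainbow c vs)))"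

definition cube_verts :: "nat \<Rightarrow> bool list set" where
  "cube_verts n = {xs. length xs = n}"

definition cube_adj :: "bool list \<Rightarrow> bool list \<Rightarrow> bool" where
  "cube_adj xs ys \<longleftrightarrow> length xs = length ys \<and> card {i. i < length xs \<and> xs ! i \<noteq> ys ! i} = 1"

definition cube_edges :: "nat \<Rightarrow> bool list set set" where
  "cube_edges n = {{u, v} | u v. u \<in> cube_verts n \<and> v \<in> cube_verts n \<and> cube_adj u v}"

end

theory Submission
  imports Defs
begin

lemma cycle_edge_inj:
  assumes "is_cycle E vs"
  shows "inj_on (\<lambda>i. {vs ! i, vs ! ((i + 1) mod length vs)}) {..<length vs}"
proof (rule inj_onI)
  fix i j assume i: "i \<in> {..<length vs}" and j: "j \<in> {..<length vs}"
    and eq: "{vs ! i, vs ! ((i + 1) mod length vs)} = {vs ! j, vs ! ((j + 1) mod length vs)}"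
  define L where "L = length vs"
  have L3: "L \<ge> 3" and d: "distinct vs" using assms unfolding is_cycle_def L_def by auto
  have il: "i < L" and jl: "j < L" using i j L_def by auto
  have si: "(i+1) mod L < L" "(j+1) mod L < L" using L3 by auto
  show "i = j"
  proof (rule ccontr)
    assume ne: "i \<noteq> j"
    have "vs ! i \<noteq> vs ! j" using d il jl ne nth_eq_iff_index_eq L_def by metis
    hence a: "vs ! i = vs ! ((j + 1) mod L)" and b: "vs ! ((i + 1) mod L) = vs ! j"
      using eq unfolding L_def by (auto simp: doubleton_eq_iff)
    have a': "i = (j+1) mod L" using a d il si nth_eq_iff_index_eq L_def by metis
    have b': "(i+1) mod L = j" using b d jl si nth_eq_iff_index_eq L_def by metis
    have "(j + 2) mod L = j" using a' b' by (simp add: mod_Suc_eq)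
    have "j + 2 < L \<or> j + 2 = L \<or> j + 2 = L + 1" using jl by auto
    moreover have "(L + 1) mod L = 1" using L3 by (simp add: mod_Suc)
    moreover {assume "j + 2 < L" hence False using \<open>(j + 2) mod L = j\<close> by simp}
    moreover {assume "j + 2 = L" hence False using \<open>(j + 2) mod L = j\<close> L3 by simp}
    moreover {assume "j + 2 = L + 1" hence False using \<open>(j + 2) mod L = j\<close> \<open>(L + 1) mod L = 1\<close> L3 by simp}
    ultimately show False by blast
  qed
qed

lemma cycle_edges_eq: "cycle_edges vs = (\<lambda>i. {vs ! i, vs ! ((i + 1) mod length vs)}) ` {..<length vs}"
  unfolding cycle_edges_def by auto

lemma card_cycle_edges:
  assumes "is_cycle E vs" shows "card (cycle_edges vs) = length vs"
proof -
  have "card ((\<lambda>i. {vs ! i, vs ! ((i + 1) mod length vs)}) ` {..<length vs}) = length vs"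
    using card_image[OF cycle_edge_inj[OF assms]] by simp
  thus ?thesis by (simp only: cycle_edges_eq)
qed

lemma cycle_edges_sub: "is_cycle E vs \<Longrightarrow> cycle_edges vs \<subseteq> E"
  unfolding is_cycle_def cycle_edges_def by auto

lemma rainbow_len:
  assumes "is_cycle E vs" "rainbow c vs" "\<forall>e\<in>E. c e < m"
  shows "length vs \<le> m"
proof -
  have "card (c ` cycle_edges vs) = length vs"
    using assms(2) card_image card_cycle_edges[OF assms(1)] unfolding rainbow_def by metis
  moreover have "c ` cycle_edges vs \<subseteq> {..<m}" using cycle_edges_sub[OF assms(1)] assms(3) by auto
  ultimately show ?thesis by (metis card_lessThan card_mono finite_lessThan)
qed

lemma crx_eq:
  assumes "\<exists>c. (\<forall>e\<in>E. c e < m0) \<and> (\<forall>S. S \<subseteq> V \<and> card S = k \<longrightarrow> (\<exists>vs. is_cycle E vs \<and> S \<subseteq> set vs \<and> rainbow c vs))"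
    and "S0 \<subseteq> V" "card S0 = k" "\<And>vs. is_cycle E vs \<Longrightarrow> S0 \<subseteq> set vs \<Longrightarrow> m0 \<le> length vs"
  shows "crx V E k = m0"
  unfolding crx_def
proof (rule Least_equality)
  show "\<exists>c. (\<forall>e\<in>E. c e < m0) \<and> (\<forall>S. S \<subseteq> V \<and> card S = k \<longrightarrow> (\<exists>vs. is_cycle E vs \<and> S \<subseteq> set vs \<and> rainbow c vs))"
    by (rule assms(1))
next
  fix m assume "\<exists>c. (\<forall>e\<in>E. c e < m) \<and> (\<forall>S. S \<subseteq> V \<and> card S = k \<longrightarrow> (\<exists>vs. is_cycle E vs \<and> S \<subseteq> set vs \<and> rainbow c vs))"
  then obtain c where c: "\<forall>e\<in>E. c e < m" and S: "\<forall>S. S \<subseteq> V \<and> card S = k \<longrightarrow> (\<exists>vs. is_cycle E vs \<and> S \<subseteq> set vs \<and> rainbow c vs)" by blast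
  obtain vs where "is_cycle E vs" "S0 \<subseteq> set vs" "rainbow c vs" using S assms(2,3) by blast
  thus "m0 \<le> m" using assms(4) rainbow_len c by (meson le_trans)
qed

definition dset :: "bool list \<Rightarrow> bool list \<Rightarrow> nat \<Rightarrow> nat set" where
  "dset x y n = {i. i < n \<and> x ! i \<noteq> y ! i}"

lemma dset_sym: "dset x y n = dset y x n" unfolding dset_def by auto

lemma cube_edgeI:
  assumes "length x = n" "length y = n" "card (dset x y n) = 1"
  shows "{x, y} \<in> cube_edges n"
proof -
  have "x \<in> cube_verts n" "y \<in> cube_verts n" "cube_adj x y"
    using assms unfolding cube_verts_def cube_adj_def dset_def by auto
  thus ?thesis unfolding cube_edges_def by blast
qed

lemma cube_edgeD:
  assumes "{x, y} \<in> cube_edges n"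
  shows "length x = n \<and> length y = n \<and> card (dset x y n) = 1"
proof -
  obtain u v where uv: "{x,y} = {u,v}" "u \<in> cube_verts n" "v \<in> cube_verts n" "cube_adj u v"
    using assms unfolding cube_edges_def by blast
  hence uv2: "length u = n" "length v = n" "card (dset u v n) = 1"
    unfolding cube_verts_def cube_adj_def dset_def by auto
  have "(x = u \<and> y = v) \<or> (x = v \<and> y = u)" using uv(1) by (simp add: doubleton_eq_iff)
  thus ?thesis
  proof
    assume "x = u \<and> y = v" thus ?thesis using uv2 by simp
  next
    assume "x = v \<and> y = u" thus ?thesis using uv2 dset_sym[of x y n] by simp
  qed
qed

lemma cyc_step:
  assumes "is_cycle (cube_edges n) vs" "i < length vs"
  shows "length (vs ! i) = n \<and> length (vs ! ((i+1) mod length vs)) = n \<and>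
         card (dset (vs ! i) (vs ! ((i+1) mod length vs)) n) = 1"
  using assms cube_edgeD unfolding is_cycle_def by blast

lemma cyc_len: "is_cycle E vs \<Longrightarrow> length vs \<ge> 3" unfolding is_cycle_def by auto

lemma cyc_vert: 
  assumes "is_cycle (cube_edges n) vs" "x \<in> set vs" shows "length x = n"
proof -
  obtain i where "i < length vs" "vs ! i = x" using assms(2) by (meson in_set_conv_nth)
  thus ?thesis using cyc_step[OF assms(1)] by blast
qed

lemma dset_trans:
  assumes "card (dset x y n) = 1" "card (dset y z n) = 1"
  shows "card (dset x z n) \<noteq> 1"
proof -
  obtain i where i: "dset x y n = {i}" using assms(1) card_1_singletonE by blast
  obtain j where j: "dset y z n = {j}" using assms(2) card_1_singletonE by blast
  have xz: "dset x z n = {i} - {j} \<union> ({j} - {i})"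
  proof (rule set_eqI)
    fix l
    have "l \<in> dset x z n \<longleftrightarrow> l < n \<and> ((l \<in> dset x y n) \<noteq> (l \<in> dset y z n))"
      unfolding dset_def by auto
    moreover have "i < n" "j < n" using i j unfolding dset_def by auto
    ultimately show "l \<in> dset x z n \<longleftrightarrow> l \<in> {i} - {j} \<union> ({j} - {i})" using i j by auto
  qed
  show ?thesis
  proof (cases "i = j")
    case True thus ?thesis using xz by simp
  next
    case False thus ?thesis using xz by auto
  qed
qed

lemma cube_cycle_len4:
  assumes "is_cycle (cube_edges n) vs" shows "4 \<le> length vs"
proof (rule ccontr)
  assume "\<not> 4 \<le> length vs"
  hence L: "length vs = 3" using cyc_len[OF assms] by auto
  have a: "card (dset (vs!0) (vs!1) n) = 1" using cyc_step[OF assms, of 0] L by simp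
  have b: "card (dset (vs!1) (vs!2) n) = 1" using cyc_step[OF assms, of 1] L by (simp add: numeral_2_eq_2)
  have c: "card (dset (vs!2) (vs!0) n) = 1" using cyc_step[OF assms, of 2] L by (simp add: numeral_2_eq_2)
  show False using dset_trans[OF a b] c dset_sym by metis
qed

lemma walk:
  assumes "s + d < length vs"
    and "\<forall>t. s \<le> t \<longrightarrow> t < s + d \<longrightarrow> vs ! t ! j = vs ! ((t+1) mod length vs) ! j"
  shows "vs ! s ! j = vs ! (s + d) ! j"
  using assms
proof (induction d)
  case 0 then show ?case by simp
next
  case (Suc d)
  have "vs ! s ! j = vs ! (s + d) ! j" using Suc by auto
  also have "\<dots> = vs ! ((s + d + 1) mod length vs) ! j" using Suc.prems(2) by auto
  also have "(s + d + 1) mod length vs = s + Suc d" using Suc.prems(1) by simp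
  finally show ?case .
qed

lemma antipodal_aux:
  assumes cyc: "is_cycle (cube_edges n) vs" and pq: "p < q" "q < length vs"
    and diff: "\<forall>j<n. vs ! p ! j \<noteq> vs ! q ! j"
  shows "2 * n \<le> length vs"
proof -
  define L where "L = length vs"
  have L3: "L \<ge> 3" using cyc_len[OF cyc] L_def by simp
  define fl where "fl t j \<longleftrightarrow> vs ! t ! j \<noteq> vs ! ((t+1) mod L) ! j" for t j
  have uniq: "j = j'" if "t < L" "j < n" "j' < n" "fl t j" "fl t j'" for t j j'
  proof -
    have "card (dset (vs ! t) (vs ! ((t+1) mod L)) n) = 1" using cyc_step[OF cyc] that L_def by auto
    then obtain i where "dset (vs ! t) (vs ! ((t+1) mod L)) n = {i}" using card_1_singletonE by blast
    moreover have "j \<in> dset (vs ! t) (vs ! ((t+1) mod L)) n" "j' \<in> dset (vs ! t) (vs ! ((t+1) mod L)) n"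
      using that unfolding dset_def fl_def by auto
    ultimately show ?thesis by simp
  qed
  have arc1: "\<exists>t. p \<le> t \<and> t < q \<and> fl t j" if "j < n" for j
  proof (rule ccontr)
    assume "\<not> ?thesis"
    hence "\<forall>t. p \<le> t \<longrightarrow> t < p + (q - p) \<longrightarrow> vs ! t ! j = vs ! ((t+1) mod length vs) ! j"
      unfolding fl_def L_def by auto
    hence "vs ! p ! j = vs ! (p + (q - p)) ! j"
      using walk[of p "q - p" vs j] pq by auto
    thus False using diff that pq by simp
  qed
  have arc2: "\<exists>t. (q \<le> t \<and> t < L \<or> t < p) \<and> fl t j" if "j < n" for j
  proof (rule ccontr)
    assume na: "\<not> ?thesis"
    have "\<forall>t. q \<le> t \<longrightarrow> t < q + (L - 1 - q) \<longrightarrow> vs ! t ! j = vs ! ((t+1) mod length vs) ! j"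
      using na unfolding fl_def L_def by auto
    hence 1: "vs ! q ! j = vs ! (q + (L - 1 - q)) ! j"
      using walk[of q "L - 1 - q" vs j] pq L_def by auto
    have "q \<le> L - 1" "L - 1 < L" using pq L_def by auto
    hence "\<not> fl (L - 1) j" using na by blast
    hence 2: "vs ! (L - 1) ! j = vs ! 0 ! j" unfolding fl_def using L3 by simp
    have "\<forall>t. 0 \<le> t \<longrightarrow> t < 0 + p \<longrightarrow> vs ! t ! j = vs ! ((t+1) mod length vs) ! j"
      using na unfolding fl_def L_def by auto
    hence 3: "vs ! 0 ! j = vs ! (0 + p) ! j"
      using walk[of 0 p vs j] pq L_def by auto
    have "q + (L - 1 - q) = L - 1" using pq L_def by simp
    thus False using 1 2 3 diff that by simp
  qed
  define F where "F x = (if snd x then (SOME t. (q \<le> t \<and> t < L \<or> t < p) \<and> fl t (fst x))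
                         else (SOME t. p \<le> t \<and> t < q \<and> fl t (fst x)))" for x
  have F1: "p \<le> F (j, False) \<and> F (j, False) < q \<and> fl (F (j, False)) j" if "j < n" for j
    unfolding F_def using someI_ex[OF arc1[OF that]] by simp
  have F2: "(q \<le> F (j, True) \<and> F (j, True) < L \<or> F (j, True) < p) \<and> fl (F (j, True)) j" if "j < n" for j
    unfolding F_def using someI_ex[OF arc2[OF that]] by simp
  have Fr: "F x < L" if "x \<in> {..<n} \<times> UNIV" for x
  proof -
    obtain j b where xj: "x = (j, b)" by fastforce
    have j: "j < n" using that xj by auto
    show ?thesis
    proof (cases b)
      case True
      have "q < L" "p < L" using pq L_def by auto
      thus ?thesis using F2[OF j] xj True by auto
    next
      case False
      have "q < L" using pq L_def by auto
      thus ?thesis using F1[OF j] xj False by auto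
    qed
  qed
  have inj: "inj_on F ({..<n} \<times> UNIV)"
  proof (rule inj_onI)
    fix x y assume x: "x \<in> {..<n} \<times> (UNIV :: bool set)" and y: "y \<in> {..<n} \<times> (UNIV :: bool set)" and e: "F x = F y"
    obtain j b where xj: "x = (j, b)" by fastforce
    obtain j' b' where yj: "y = (j', b')" by fastforce
    have jn: "j < n" "j' < n" using x y xj yj by auto
    have "b = b'"
    proof (rule ccontr)
      assume "b \<noteq> b'"
      show False
      proof (cases b)
        case True
        hence "b' = False" using \<open>b \<noteq> b'\<close> by simp
        thus False using F1[OF jn(2)] F2[OF jn(1)] e xj yj True by auto
      next
        case False
        hence "b' = True" using \<open>b \<noteq> b'\<close> by simp
        thus False using F1[OF jn(1)] F2[OF jn(2)] e xj yj False by auto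
      qed
    qed
    moreover have "fl (F x) j" "fl (F y) j'" using F1 F2 jn xj yj by (cases b; cases b'; auto)+
    ultimately show "x = y" using uniq[of "F x" j j'] e Fr[OF x] jn xj yj by auto
  qed
  have "card ({..<n} \<times> (UNIV :: bool set)) \<le> card {..<L}"
    using card_inj_on_le[OF inj] Fr by (metis finite_lessThan image_subsetI lessThan_iff)
  thus ?thesis by (simp add: card_cartesian_product L_def)
qed

lemma antipodal_len:
  assumes cyc: "is_cycle (cube_edges n) vs" and ab: "a \<in> set vs" "b \<in> set vs"
    and diff: "\<forall>j<n. a ! j \<noteq> b ! j" and n: "n \<ge> 1"
  shows "2 * n \<le> length vs"
proof -
  obtain p where p: "p < length vs" "vs ! p = a" using ab by (meson in_set_conv_nth)
  obtain q where q: "q < length vs" "vs ! q = b" using ab by (meson in_set_conv_nth)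
  have "p \<noteq> q" using diff n p q by auto
  hence "p < q \<or> q < p" by auto
  thus ?thesis
  proof
    assume "p < q" thus ?thesis using antipodal_aux[OF cyc _ q(1)] p q diff by auto
  next
    assume "q < p" thus ?thesis using antipodal_aux[OF cyc _ p(1)] p q diff by auto
  qed
qed

section \<open>Parity\<close>

definition par :: "bool list \<Rightarrow> bool" where
  "par x \<longleftrightarrow> even (card {i. i < length x \<and> x ! i})"

lemma par_adj:
  assumes "length x = n" "length y = n" "card (dset x y n) = 1"
  shows "par x \<noteq> par y"
proof -
  obtain i where i: "dset x y n = {i}" using assms(3) card_1_singletonE by blast
  have inn: "i < n" and xy: "x ! i \<noteq> y ! i" using i unfolding dset_def by auto
  have oth: "x ! l = y ! l" if "l < n" "l \<noteq> i" for l
    using i that unfolding dset_def by auto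
  define S where "S = {l. l < n \<and> x ! l}"
  define T where "T = {l. l < n \<and> y ! l}"
  have fS: "finite S" unfolding S_def by auto
  show ?thesis
  proof (cases "x ! i")
    case True
    have "T = S - {i}" unfolding S_def T_def using oth xy True by auto
    moreover have "i \<in> S" using True inn S_def by auto
    ultimately have "card S = Suc (card T)" using fS by (metis card_Suc_Diff1)
    thus ?thesis unfolding par_def using assms S_def T_def by auto
  next
    case False
    have "T = insert i S" unfolding S_def T_def using oth xy False inn by auto
    moreover have "i \<notin> S" using False S_def by auto
    ultimately have "card T = Suc (card S)" using fS by simp
    thus ?thesis unfolding par_def using assms S_def T_def by auto
  qed
qed

lemma card_cube: "card (cube_verts n) = 2 ^ n"
proof -
  have "cube_verts n = {xs. set xs \<subseteq> (UNIV :: bool set) \<and> length xs = n}" unfolding cube_verts_def by auto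
  thus ?thesis using card_lists_length_eq[of "UNIV :: bool set" n] by simp
qed

lemma finite_cube: "finite (cube_verts n)"
  using card_cube by (metis card.infinite nat.simps(3) power_not_zero zero_neq_numeral Suc_eq_plus1)

definition Ev :: "nat \<Rightarrow> bool list set" where "Ev n = {x \<in> cube_verts n. par x}"

lemma card_Ev:
  assumes "n \<ge> 1" shows "2 * card (Ev n) = 2 ^ n"
proof -
  define Od where "Od = {x \<in> cube_verts n. \<not> par x}"
  define f where "f x = x[0 := \<not> x ! 0]" for x :: "bool list"
  have fl: "length (f x) = length x" for x unfolding f_def by simp
  have fd: "card (dset x (f x) n) = 1" if "length x = n" for x
  proof -
    have "dset x (f x) n = {0}" unfolding dset_def f_def using that assms by (auto simp: nth_list_update)
    thus ?thesis by simp
  qed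
  have ff: "f (f x) = x" for x unfolding f_def by (cases x) auto
  have pf: "par (f x) \<noteq> par x" if "length x = n" for x using par_adj[OF that fl[of x, unfolded that] fd[OF that]] by simp
  have im1: "f ` Ev n \<subseteq> Od"
  proof
    fix y assume "y \<in> f ` Ev n"
    then obtain x where "x \<in> Ev n" "y = f x" by blast
    thus "y \<in> Od" using pf[of x] fl[of x] unfolding Ev_def Od_def cube_verts_def by auto
  qed
  have im2: "f ` Od \<subseteq> Ev n"
  proof
    fix y assume "y \<in> f ` Od"
    then obtain x where "x \<in> Od" "y = f x" by blast
    thus "y \<in> Ev n" using pf[of x] fl[of x] unfolding Ev_def Od_def cube_verts_def by auto
  qed
  have "bij_betw f (Ev n) Od"
    by (rule bij_betw_byWitness[where f' = f]) (use ff im1 im2 in auto)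
  hence "card (Ev n) = card Od" by (rule bij_betw_same_card)
  moreover have "cube_verts n = Ev n \<union> Od" "Ev n \<inter> Od = {}" unfolding Ev_def Od_def by auto
  moreover have "finite (Ev n)" "finite Od" using finite_cube unfolding Ev_def Od_def by auto
  ultimately show ?thesis using card_cube[of n] card_Un_disjoint by (metis mult_2)
qed

lemma suc_mod_inj:
  fixes i j L :: nat
  assumes "i < L" "j < L" "(i + 1) mod L = (j + 1) mod L" shows "i = j"
proof -
  have "(i + 1) mod L = (if i + 1 = L then 0 else i + 1)" using assms(1) by auto
  moreover have "(j + 1) mod L = (if j + 1 = L then 0 else j + 1)" using assms(2) by auto
  ultimately show ?thesis using assms by (auto split: if_splits)
qed

lemma ham_lower:
  assumes cyc: "is_cycle (cube_edges n) vs" and sub: "Ev n \<subseteq> set vs"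
  shows "2 * card (Ev n) \<le> length vs"
proof -
  define L where "L = length vs"
  define I where "I = {i. i < L \<and> par (vs ! i)}"
  define J where "J = {i. i < L \<and> \<not> par (vs ! i)}"
  define h where "h i = (i + 1) mod L" for i
  have L3: "L \<ge> 3" using cyc_len[OF cyc] L_def by simp
  have "inj_on h I"
  proof (rule inj_onI)
    fix x y assume "x \<in> I" "y \<in> I" "h x = h y"
    thus "x = y" using suc_mod_inj[of x L y] unfolding h_def I_def by auto
  qed
  moreover have "h ` I \<subseteq> J"
  proof
    fix y assume "y \<in> h ` I"
    then obtain i where i: "i \<in> I" "y = h i" by blast
    have "i < L" using i I_def by auto
    hence "par (vs ! i) \<noteq> par (vs ! h i)" using cyc_step[OF cyc, of i] par_adj unfolding h_def L_def by blast
    moreover have "h i < L" unfolding h_def using L3 by simp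
    ultimately show "y \<in> J" using i unfolding I_def J_def by auto
  qed
  moreover have "finite J" unfolding J_def by auto
  ultimately have IJ: "card I \<le> card J" by (metis card_image card_mono)
  have "I \<union> J = {..<L}" "I \<inter> J = {}" unfolding I_def J_def by auto
  hence IJL: "card I + card J = L" by (metis card_Un_disjoint card_lessThan finite_Un finite_lessThan)
  have "Ev n \<subseteq> (\<lambda>i. vs ! i) ` I"
  proof
    fix x assume x: "x \<in> Ev n"
    then obtain i where "i < L" "vs ! i = x" using sub L_def by (meson in_set_conv_nth subsetD)
    thus "x \<in> (\<lambda>i. vs ! i) ` I" using x unfolding I_def Ev_def by auto
  qed
  hence "card (Ev n) \<le> card I" by (metis card_image_le card_mono finite_imageI I_def finite_Collect_conjI finite_lessThan lessThan_def order_trans)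
  thus ?thesis using IJ IJL L_def by linarith
qed

lemma index_colouring:
  assumes cyc: "is_cycle E vs"
  shows "\<exists>c. (\<forall>e\<in>E. c e < length vs) \<and> rainbow c vs"
proof -
  define L where "L = length vs"
  define ed where "ed i = {vs ! i, vs ! ((i + 1) mod L)}" for i
  define c where "c e = (if \<exists>i<L. e = ed i then (LEAST i. i < L \<and> e = ed i) else 0)" for e
  have L3: "L \<ge> 3" using cyc_len[OF cyc] L_def by simp
  have cl: "c e < L" for e
  proof (cases "\<exists>i<L. e = ed i")
    case True
    then obtain i where "i < L \<and> e = ed i" by blast
    hence "(LEAST i. i < L \<and> e = ed i) < L" by (metis (mono_tags, lifting) LeastI)
    thus ?thesis using True c_def by simp
  next
    case False
    have "c e = 0" unfolding c_def using False by auto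
    thus ?thesis using L3 by simp
  qed
  have ce: "ed (c e) = e" if ex: "\<exists>i<L. e = ed i" for e
  proof -
    obtain i where "i < L \<and> e = ed i" using ex by blast
    hence "(LEAST i. i < L \<and> e = ed i) < L \<and> e = ed (LEAST i. i < L \<and> e = ed i)" by (rule LeastI)
    thus ?thesis using ex c_def by simp
  qed
  have "inj_on c (cycle_edges vs)"
  proof (rule inj_onI)
    fix e e' assume "e \<in> cycle_edges vs" "e' \<in> cycle_edges vs" "c e = c e'"
    moreover have "\<exists>i<L. e = ed i" "\<exists>i<L. e' = ed i"
      using calculation unfolding cycle_edges_def ed_def L_def by auto
    ultimately show "e = e'" using ce by metis
  qed
  thus ?thesis using cl L_def unfolding rainbow_def by blast
qed

section \<open>Gray code\<close>

fun gray :: "nat \<Rightarrow> bool list list" where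
  "gray 0 = [[]]"
| "gray (Suc n) = map (Cons False) (gray n) @ map (Cons True) (rev (gray n))"

definition adj :: "bool list \<Rightarrow> bool list \<Rightarrow> bool" where
  "adj x y \<longleftrightarrow> length x = length y \<and> card (dset x y (length x)) = 1"

lemma dset_Cons: "dset (b # x) (b # y) (Suc m) = Suc ` dset x y m"
proof (rule set_eqI)
  fix l show "l \<in> dset (b # x) (b # y) (Suc m) \<longleftrightarrow> l \<in> Suc ` dset x y m"
    unfolding dset_def by (cases l) auto
qed

lemma adj_Cons: "adj (b # x) (b # y) \<longleftrightarrow> adj x y"
  unfolding adj_def using dset_Cons by (simp add: card_image)

lemma adj_sym: "adj x y \<Longrightarrow> adj y x" unfolding adj_def by (metis dset_sym)

lemma gray_len: "length (gray n) = 2 ^ n" by (induction n) auto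

lemma gray_elen: "x \<in> set (gray n) \<Longrightarrow> length x = n" by (induction n arbitrary: x) auto

lemma gray_distinct: "distinct (gray n)"
  by (induction n) (auto simp: distinct_map inj_on_def)

lemma gray_ne: "gray n \<noteq> []" using gray_len[of n] by auto

lemma gray_hd: "hd (gray n) = replicate n False"
  by (induction n) (auto simp: gray_ne hd_map)

lemma gray_last: "last (gray (Suc n)) = True # replicate n False"
  by (simp add: gray_ne last_map gray_hd last_rev)

lemma gray_succ: "successively adj (gray n)"
proof (induction n)
  case 0 then show ?case by simp
next
  case (Suc n)
  have j: "adj (last (map (Cons False) (gray n))) (hd (map (Cons True) (rev (gray n))))"
  proof -
    define z where "z = last (gray n)"
    have "last (map (Cons False) (gray n)) = False # z" "hd (map (Cons True) (rev (gray n))) = True # z"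
      using gray_ne by (auto simp: z_def last_map hd_map hd_rev)
    moreover have "dset (False # z) (True # z) (Suc (length z)) = {0}" unfolding dset_def
      by (auto simp: nth_Cons')
    ultimately show ?thesis unfolding adj_def by simp
  qed
  have "successively adj (map (Cons False) (gray n))" using Suc by (simp add: successively_map adj_Cons)
  moreover have "successively adj (map (Cons True) (rev (gray n)))"
    using Suc by (simp add: successively_map adj_Cons) (metis adj_sym successively_mono)
  ultimately show ?case using j by (simp add: successively_append_iff)
qed

lemma gray_set: "set (gray n) = cube_verts n"
proof -
  have "set (gray n) \<subseteq> cube_verts n" using gray_elen unfolding cube_verts_def by auto
  moreover have "card (set (gray n)) = 2 ^ n" using gray_distinct gray_len distinct_card by metis
  ultimately show ?thesis using card_cube finite_cube by (metis card_subset_eq)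
qed

lemma gray_cycle:
  assumes "n \<ge> 2" shows "is_cycle (cube_edges n) (gray n)"
proof -
  define L where "L = length (gray n)"
  have "L = 2 ^ n" using gray_len L_def by simp
  moreover have "(2::nat) ^ n \<ge> 2 ^ 2" using power_increasing[OF assms, of "2::nat"] by simp
  ultimately have L4: "L \<ge> 4" by simp
  have ed: "{gray n ! i, gray n ! ((i + 1) mod L)} \<in> cube_edges n" if "i < L" for i
  proof -
    have "adj (gray n ! i) (gray n ! ((i + 1) mod L))"
    proof (cases "i + 1 < L")
      case True
      thus ?thesis using successively_nth[OF gray_succ[of n], of i] L_def by simp
    next
      case False
      hence "i = L - 1" using that by simp
      hence "gray n ! i = last (gray n)" "gray n ! ((i + 1) mod L) = hd (gray n)"
        using L4 L_def gray_ne by (auto simp: last_conv_nth hd_conv_nth)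
      moreover obtain m where "n = Suc m" using assms by (cases n) auto
      moreover have "dset (True # replicate m False) (replicate (Suc m) False) (Suc m) = {0}"
        unfolding dset_def by (auto simp: nth_Cons')
      ultimately have "gray n ! i = True # replicate m False" "gray n ! ((i + 1) mod L) = replicate (Suc m) False"
        using gray_last[of m] gray_hd[of n] by simp_all
      thus ?thesis unfolding adj_def using \<open>dset (True # replicate m False) (replicate (Suc m) False) (Suc m) = {0}\<close> by simp
    qed
    moreover have "length (gray n ! i) = n" using that L_def gray_elen nth_mem by blast
    ultimately show ?thesis using cube_edgeI unfolding adj_def by metis
  qed
  show ?thesis unfolding is_cycle_def using L4 gray_distinct ed L_def by auto
qed

definition dir :: "bool list set \<Rightarrow> nat" where
  "dir e = (LEAST i. \<exists>a\<in>e. \<exists>b\<in>e. i < length a \<and> a ! i \<noteq> b ! i)"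

definition col :: "(nat \<Rightarrow> nat) \<Rightarrow> bool list set \<Rightarrow> nat" where
  "col g e = 2 * dir e + (if \<exists>a\<in>e. a ! g (dir e) then 1 else 0)"

lemma dir_eq:
  assumes "length x = n" "length y = n" "dset x y n = {i0}"
  shows "dir {x, y} = i0"
proof -
  have P: "(\<exists>a\<in>{x,y}. \<exists>b\<in>{x,y}. i < length a \<and> a ! i \<noteq> b ! i) \<longleftrightarrow> i = i0" for i
  proof -
    have "(\<exists>a\<in>{x,y}. \<exists>b\<in>{x,y}. i < length a \<and> a ! i \<noteq> b ! i) \<longleftrightarrow> i \<in> dset x y n"
      using assms(1,2) unfolding dset_def by auto
    thus ?thesis using assms(3) by simp
  qed
  show ?thesis unfolding dir_def P by (rule Least_equality) auto
qed

lemma col_bound: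
  assumes "e \<in> cube_edges n" shows "col g e < 2 * n"
proof -
  obtain x y where e: "e = {x, y}" using assms unfolding cube_edges_def by blast
  have h: "length x = n" "length y = n" "card (dset x y n) = 1" using cube_edgeD assms e by auto
  then obtain i0 where i0: "dset x y n = {i0}" using card_1_singletonE by blast
  have "i0 < n" using i0 unfolding dset_def by auto
  moreover have "dir e = i0" using dir_eq[OF h(1,2) i0] e by simp
  ultimately show ?thesis unfolding col_def by auto
qed

lemma col_edge:
  assumes "length x = n" "length y = n" "dset x y n = {i0}" "g i0 \<noteq> i0" "g i0 < n"
  shows "col g {x, y} = 2 * i0 + (if x ! g i0 then 1 else 0)"
proof -
  have d: "dir {x, y} = i0" using dir_eq[OF assms(1-3)] .
  have "g i0 \<notin> dset x y n" using assms(3,4) by auto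
  hence "x ! g i0 = y ! g i0" using assms(5) unfolding dset_def by auto
  thus ?thesis unfolding col_def d by auto
qed

locale sigtau =
  fixes n :: nat and p q :: "nat \<Rightarrow> nat" and w :: "nat \<Rightarrow> bool" and g :: "nat \<Rightarrow> nat" and h :: nat
  assumes n2: "n \<ge> 2"
    and bp: "bij_betw p {..<n} {..<n}" and bq: "bij_betw q {..<n} {..<n}"
    and hn: "h < n" and ph: "p h = n - 1" and qh: "q h = n - 1"
    and gn: "\<And>i. i < n \<Longrightarrow> g i < n \<and> g i \<noteq> i"
    and agree: "\<And>i. i < n \<Longrightarrow> (p (g i) < p i \<longleftrightarrow> q (g i) < q i)"
begin

definition F :: "nat \<Rightarrow> nat set" where
  "F k = (if k \<le> n then {i. i < n \<and> p i < k} else {i. i < n \<and> k - n \<le> q i})"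

definition V :: "nat \<Rightarrow> bool list" where
  "V k = map (\<lambda>j. w j \<noteq> (j \<in> F k)) [0..<n]"

definition vs :: "bool list list" where
  "vs = map V [0..<2 * n]"

lemma pn: "i < n \<Longrightarrow> p i < n" using bp bij_betwE by blast
lemma qn: "i < n \<Longrightarrow> q i < n" using bq bij_betwE by blast
lemma pinj: "i < n \<Longrightarrow> j < n \<Longrightarrow> p i = p j \<Longrightarrow> i = j" using bp unfolding bij_betw_def inj_on_def by auto
lemma qinj: "i < n \<Longrightarrow> j < n \<Longrightarrow> q i = q j \<Longrightarrow> i = j" using bq unfolding bij_betw_def inj_on_def by auto
lemma psurj: "k < n \<Longrightarrow> \<exists>i<n. p i = k" using bp unfolding bij_betw_def by (metis imageE lessThan_iff)
lemma qsurj: "k < n \<Longrightarrow> \<exists>i<n. q i = k" using bq unfolding bij_betw_def by (metis imageE lessThan_iff)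

lemma F_hi: "n \<le> k \<Longrightarrow> F k = {i. i < n \<and> k - n \<le> q i}"
  unfolding F_def using pn by auto

lemma F_sub: "F k \<subseteq> {..<n}" unfolding F_def by auto

lemma card_F_lo: assumes "k \<le> n" shows "card (F k) = k"
proof -
  have "p ` F k = {..<k}"
  proof
    show "p ` F k \<subseteq> {..<k}" unfolding F_def using assms by auto
    show "{..<k} \<subseteq> p ` F k"
    proof
      fix j assume "j \<in> {..<k}"
      hence "j < n" using assms by auto
      then obtain i where "i < n" "p i = j" using psurj by blast
      thus "j \<in> p ` F k" using \<open>j \<in> {..<k}\<close> assms unfolding F_def by auto
    qed
  qed
  moreover have "inj_on p (F k)" using pinj unfolding F_def inj_on_def by auto
  ultimately show ?thesis by (metis card_image card_lessThan)
qed

lemma card_F_hi: assumes "n \<le> k" "k \<le> 2 * n" shows "card (F k) = 2 * n - k"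
proof -
  have "q ` F k = {k - n..<n}"
  proof
    show "q ` F k \<subseteq> {k - n..<n}" unfolding F_hi[OF assms(1)] using qn by auto
    show "{k - n..<n} \<subseteq> q ` F k"
    proof
      fix j assume j: "j \<in> {k - n..<n}"
      then obtain i where "i < n" "q i = j" using qsurj by auto
      thus "j \<in> q ` F k" using j unfolding F_hi[OF assms(1)] by auto
    qed
  qed
  moreover have "inj_on q (F k)" using qinj unfolding F_def inj_on_def by auto
  ultimately have "card (F k) = n - (k - n)" by (metis card_image card_atLeastLessThan)
  thus ?thesis using assms by simp
qed

lemma F_inj: assumes "k < 2 * n" "l < 2 * n" "F k = F l" shows "k = l"
proof -
  have hF: "h \<in> F k \<longleftrightarrow> (n \<le> k)" if "k < 2 * n" for k
    unfolding F_def using ph qh hn that n2 by auto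
  consider "k \<le> n" "l \<le> n" | "n \<le> k" "n \<le> l" | "k < n" "n < l" | "l < n" "n < k" by linarith
  thus ?thesis
  proof cases
    case 1 thus ?thesis using card_F_lo assms by metis
  next
    case 2 thus ?thesis using card_F_hi assms by (metis diff_diff_cancel less_imp_le_nat)
  next
    case 3
    have "h \<notin> F k" using hF[of k] 3 assms(1) by auto
    moreover have "h \<in> F l" using hF[of l] 3 assms(2) by auto
    ultimately show ?thesis using assms(3) by simp
  next
    case 4
    have "h \<notin> F l" using hF[of l] 4 assms(2) by auto
    moreover have "h \<in> F k" using hF[of k] 4 assms(1) by auto
    ultimately show ?thesis using assms(3) by simp
  qed
qed

lemma V_len: "length (V k) = n" unfolding V_def by simp

lemma V_nth: "j < n \<Longrightarrow> V k ! j = (w j \<noteq> (j \<in> F k))" unfolding V_def by simp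

lemma V_inj: assumes "k < 2 * n" "l < 2 * n" "V k = V l" shows "k = l"
proof -
  have "F k = F l"
  proof (rule set_eqI)
    fix j show "j \<in> F k \<longleftrightarrow> j \<in> F l"
    proof (cases "j < n")
      case True thus ?thesis using arg_cong[OF assms(3), of "\<lambda>x. x ! j"] V_nth by auto
    next
      case False thus ?thesis using F_sub by auto
    qed
  qed
  thus ?thesis using F_inj assms by simp
qed

lemma F_bit_lo: "k \<le> n \<Longrightarrow> j < n \<Longrightarrow> j \<in> F k \<longleftrightarrow> p j < k" unfolding F_def by auto
lemma F_bit_hi: "n \<le> k \<Longrightarrow> j < n \<Longrightarrow> j \<in> F k \<longleftrightarrow> k - n \<le> q j" using F_hi by auto

definition R :: "nat \<Rightarrow> nat \<Rightarrow> bool" where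
  "R k i \<longleftrightarrow> (if k < n then p i = k else q i = k - n)"

lemma step_dset:
  assumes "k < 2 * n"
  shows "dset (V k) (V ((k + 1) mod (2 * n))) n = {i. i < n \<and> R k i}"
proof -
  have "j \<in> F k \<longleftrightarrow> j \<notin> F ((k + 1) mod (2 * n)) \<longleftrightarrow> R k j" if "j < n" for j
  proof -
    consider "k < n" | "n \<le> k" "k + 1 < 2 * n" | "k + 1 = 2 * n" using assms by linarith
    thus ?thesis
    proof cases
      case 1
      hence m: "(k + 1) mod (2 * n) = k + 1" using n2 by simp
      have A: "j \<in> F k \<longleftrightarrow> p j < k" using F_bit_lo 1 that by simp
      have B: "j \<in> F (k + 1) \<longleftrightarrow> p j < k + 1" using F_bit_lo 1 that by simp
      show ?thesis unfolding m R_def using A B 1 by auto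
    next
      case 2
      hence m: "(k + 1) mod (2 * n) = k + 1" by simp
      have A: "j \<in> F k \<longleftrightarrow> k - n \<le> q j" using F_bit_hi 2 that by simp
      have B: "j \<in> F (k + 1) \<longleftrightarrow> k + 1 - n \<le> q j" using F_bit_hi 2 that by simp
      show ?thesis unfolding m R_def using A B 2 by auto
    next
      case 3
      hence "(k + 1) mod (2 * n) = 0" by simp
      moreover have "n \<le> k" "k - n = n - 1" using 3 n2 by auto
      have A: "j \<in> F k \<longleftrightarrow> k - n \<le> q j" using F_bit_hi \<open>n \<le> k\<close> that by simp
      have B: "j \<notin> F 0" using F_bit_lo that by simp
      have "q j < n" using qn that by simp
      thus ?thesis unfolding R_def using A B \<open>(k + 1) mod (2 * n) = 0\<close> \<open>k - n = n - 1\<close> \<open>n \<le> k\<close> by auto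
    qed
  qed
  thus ?thesis unfolding dset_def using V_nth by auto
qed

lemma R_unique: assumes "k < 2 * n" shows "\<exists>i0. {i. i < n \<and> R k i} = {i0}"
proof (cases "k < n")
  case True
  then obtain i0 where "i0 < n" "p i0 = k" using psurj by auto
  hence "{i. i < n \<and> R k i} = {i0}" unfolding R_def using True pinj by auto
  thus ?thesis by blast
next
  case False
  hence "k - n < n" using assms by auto
  then obtain i0 where "i0 < n" "q i0 = k - n" using qsurj by auto
  hence "{i. i < n \<and> R k i} = {i0}" unfolding R_def using False qinj by auto
  thus ?thesis by blast
qed

lemma vs_len: "length vs = 2 * n" unfolding vs_def by simp

lemma vs_nth: "k < 2 * n \<Longrightarrow> vs ! k = V k" unfolding vs_def by simp

lemma is_cyc: "is_cycle (cube_edges n) vs"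
  unfolding is_cycle_def
proof (intro conjI allI impI)
  show "3 \<le> length vs" using vs_len n2 by simp
  show "distinct vs" unfolding vs_def distinct_map using V_inj by (auto simp: inj_on_def)
  fix k assume k: "k < length vs"
  hence k2: "k < 2 * n" using vs_len by simp
  have "(k + 1) mod (2 * n) < 2 * n" using n2 by simp
  hence e: "vs ! ((k + 1) mod length vs) = V ((k + 1) mod (2 * n))" using vs_nth vs_len by simp
  obtain i0 where "{i. i < n \<and> R k i} = {i0}" using R_unique[OF k2] by blast
  hence "card (dset (V k) (V ((k + 1) mod (2 * n))) n) = 1" using step_dset[OF k2] by simp
  thus "{vs ! k, vs ! ((k + 1) mod length vs)} \<in> cube_edges n"
    using cube_edgeI[OF V_len V_len] e vs_nth[OF k2] by simp
qed

lemma edge_col: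
  assumes "k < 2 * n" "{i. i < n \<and> R k i} = {i0}"
  shows "col g {V k, V ((k + 1) mod (2 * n))} = 2 * i0 + (if V k ! g i0 then 1 else 0)"
proof -
  have "i0 < n" using assms(2) by auto
  thus ?thesis using col_edge[OF V_len V_len] step_dset[OF assms(1)] assms(2) gn by simp
qed

lemma rainbow_vs: "rainbow (col g) vs"
  unfolding rainbow_def
proof (rule inj_onI)
  fix e e' assume "e \<in> cycle_edges vs" "e' \<in> cycle_edges vs" and ce: "col g e = col g e'"
  then obtain k l where k: "k < 2 * n" "e = {V k, V ((k + 1) mod (2 * n))}"
    and l: "l < 2 * n" "e' = {V l, V ((l + 1) mod (2 * n))}"
    unfolding cycle_edges_def vs_len using vs_nth n2 by auto
  obtain i0 where i0: "{i. i < n \<and> R k i} = {i0}" using R_unique[OF k(1)] by blast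
  obtain i1 where i1: "{i. i < n \<and> R l i} = {i1}" using R_unique[OF l(1)] by blast
  have c: "2 * i0 + (if V k ! g i0 then 1 else 0) = 2 * i1 + (if V l ! g i1 then 1 else 0)"
    using ce edge_col[OF k(1) i0] edge_col[OF l(1) i1] k l by simp
  hence eq: "i0 = i1" by (auto split: if_splits) 
  hence bits: "V k ! g i0 = V l ! g i0" using c by (auto split: if_splits)
  have i0n: "i0 < n" "R k i0" "R l i0" using i0 i1 eq by auto
  have gi: "g i0 < n" "g i0 \<noteq> i0" using gn i0n(1) by auto
  show "e = e'"
  proof (cases "k = l")
    case True thus ?thesis using k l by simp
  next
    case False
    have "\<not> (k < n \<and> l < n)" using i0n False unfolding R_def by auto
    moreover have "\<not> (n \<le> k \<and> n \<le> l)" using i0n False k l unfolding R_def by auto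
    ultimately have "(k < n \<and> n \<le> l) \<or> (l < n \<and> n \<le> k)" by auto
    thus ?thesis
    proof
      assume kl: "k < n \<and> n \<le> l"
      hence pk: "p i0 = k" and ql: "q i0 = l - n" using i0n unfolding R_def by auto
      have "V k ! g i0 = (w (g i0) \<noteq> (p (g i0) < p i0))" using V_nth[OF gi(1)] F_bit_lo[of k "g i0"] kl gi pk by simp
      moreover have "V l ! g i0 = (w (g i0) \<noteq> (q i0 \<le> q (g i0)))" using V_nth[OF gi(1)] F_bit_hi[of l "g i0"] kl gi ql by simp
      ultimately show ?thesis using bits agree[OF i0n(1)] by auto
    next
      assume kl: "l < n \<and> n \<le> k"
      hence pk: "p i0 = l" and ql: "q i0 = k - n" using i0n unfolding R_def by auto
      have "V l ! g i0 = (w (g i0) \<noteq> (p (g i0) < p i0))" using V_nth[OF gi(1)] F_bit_lo[of l "g i0"] kl gi pk by simp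
      moreover have "V k ! g i0 = (w (g i0) \<noteq> (q i0 \<le> q (g i0)))" using V_nth[OF gi(1)] F_bit_hi[of k "g i0"] kl gi ql by simp
      ultimately show ?thesis using bits agree[OF i0n(1)] by auto
    qed
  qed
qed

lemma in_vs: assumes "k < 2 * n" shows "V k \<in> set vs"
  using assms vs_nth vs_len by (metis nth_mem)

end

section \<open>Ranks\<close>

definition pos :: "nat \<Rightarrow> (nat \<Rightarrow> nat) \<Rightarrow> nat \<Rightarrow> nat" where
  "pos n key i = card {j. j < n \<and> key j < key i}"

lemma pos_mono_lt:
  assumes "i < n" "j < n" "key i < key j" shows "pos n key i < pos n key j"
proof -
  have "{l. l < n \<and> key l < key i} \<subset> {l. l < n \<and> key l < key j}"
    using assms by auto
  thus ?thesis unfolding pos_def by (simp add: psubset_card_mono)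
qed

lemma pos_mono_le:
  assumes "key j \<le> key i" shows "pos n key j \<le> pos n key i"
proof -
  have "{l. l < n \<and> key l < key j} \<subseteq> {l. l < n \<and> key l < key i}" using assms by auto
  thus ?thesis unfolding pos_def by (simp add: card_mono)
qed

lemma pos_lt_iff:
  assumes "i < n" "j < n" shows "pos n key i < pos n key j \<longleftrightarrow> key i < key j"
  using pos_mono_lt[OF assms] pos_mono_le[where key=key and j=j and i=i and n=n] by (meson leD leI)

lemma pos_less: assumes "i < n" shows "pos n key i < n"
proof -
  have "{l. l < n \<and> key l < key i} \<subseteq> {..<n} - {i}" by auto
  hence "pos n key i \<le> card ({..<n} - {i})" unfolding pos_def by (simp add: card_mono)
  thus ?thesis using assms by simp
qed

lemma pos_bij:
  assumes inj: "inj_on key {..<n}" shows "bij_betw (pos n key) {..<n} {..<n}"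
proof -
  have i: "inj_on (pos n key) {..<n}"
  proof (rule inj_onI)
    fix i j assume "i \<in> {..<n}" "j \<in> {..<n}" "pos n key i = pos n key j"
    hence "key i = key j" using pos_lt_iff by (metis lessThan_iff linorder_neqE_nat less_irrefl)
    thus "i = j" using inj \<open>i \<in> {..<n}\<close> \<open>j \<in> {..<n}\<close> by (simp add: inj_on_eq_iff)
  qed
  moreover have "pos n key ` {..<n} \<subseteq> {..<n}" using pos_less by auto
  ultimately have "pos n key ` {..<n} = {..<n}" by (simp add: endo_inj_surj)
  thus ?thesis using i unfolding bij_betw_def by simp
qed

lemma pos_max:
  assumes "h < n" "\<And>j. j < n \<Longrightarrow> j \<noteq> h \<Longrightarrow> key j < key h" shows "pos n key h = n - 1"
proof -
  have "{l. l < n \<and> key l < key h} = {..<n} - {h}" using assms by auto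
  thus ?thesis unfolding pos_def using assms(1) by simp
qed

lemma pos_thresh:
  assumes "D = {i. i < n \<and> key i < K}"
  shows "D = {i. i < n \<and> pos n key i < card D}"
proof (rule set_eqI)
  fix i
  have fD: "finite D" using assms by auto
  show "i \<in> D \<longleftrightarrow> i \<in> {i. i < n \<and> pos n key i < card D}"
  proof (cases "i \<in> D")
    case True
    have "{l. l < n \<and> key l < key i} \<subseteq> D - {i}" using assms True by auto
    hence "pos n key i \<le> card (D - {i})" unfolding pos_def using fD by (simp add: card_mono)
    also have "\<dots> < card D" using True fD by (metis card_Diff1_less)
    finally show ?thesis using True assms by auto
  next
    case False
    hence "i \<ge> n \<or> key i \<ge> K" using assms by auto
    moreover {
      assume "i < n"
      hence "key i \<ge> K" using False assms by auto
      hence "D \<subseteq> {l. l < n \<and> key l < key i}" using assms by auto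
      hence "card D \<le> pos n key i" unfolding pos_def by (simp add: card_mono)
    }
    ultimately show ?thesis using False by auto
  qed
qed

lemma pos_thresh_up:
  assumes "D = {i. i < n \<and> K \<le> key i}"
  shows "D = {i. i < n \<and> n - card D \<le> pos n key i}"
proof -
  define D' where "D' = {i. i < n \<and> key i < K}"
  have e: "D' = {i. i < n \<and> pos n key i < card D'}" using pos_thresh D'_def by blast
  have "D \<union> D' = {..<n}" "D \<inter> D' = {}" using assms D'_def by auto
  hence "card D + card D' = n" by (metis card_Un_disjoint card_lessThan finite_Un finite_lessThan)
  hence cd: "card D' = n - card D" by simp
  show ?thesis
  proof (rule set_eqI)
    fix i show "i \<in> D \<longleftrightarrow> i \<in> {i. i < n \<and> n - card D \<le> pos n key i}"
    proof (cases "i < n")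
      case True
      have "i \<in> D \<longleftrightarrow> i \<notin> D'" using assms D'_def True by auto
      also have "\<dots> \<longleftrightarrow> \<not> pos n key i < n - card D" using e cd True by auto
      finally show ?thesis using True by auto
    next
      case False thus ?thesis using assms by auto
    qed
  qed
qed

definition keyf :: "nat \<Rightarrow> (nat \<Rightarrow> nat) \<Rightarrow> nat \<Rightarrow> nat" where
  "keyf n r i = r i * n + i"

lemma keyf_inj: "inj_on (keyf n r) {..<n}"
proof (rule inj_onI)
  fix i j assume "i \<in> {..<n}" "j \<in> {..<n}" "keyf n r i = keyf n r j"
  hence "(r i * n + i) mod n = (r j * n + j) mod n" "i < n" "j < n" unfolding keyf_def by auto
  thus "i = j" by simp
qed

lemma keyf_lt:
  assumes "i < n" "j < n"
  shows "keyf n r i < keyf n r j \<longleftrightarrow> r i < r j \<or> (r i = r j \<and> i < j)"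
proof
  assume a: "keyf n r i < keyf n r j"
  show "r i < r j \<or> (r i = r j \<and> i < j)"
  proof (rule ccontr)
    assume "\<not> ?thesis"
    hence "r j < r i \<or> (r i = r j \<and> j \<le> i)" by auto
    moreover {
      assume "r j < r i"
      hence "r j * n + n \<le> r i * n" by (metis Suc_leI mult_Suc mult_le_mono1 add.commute)
      hence False using a assms unfolding keyf_def by linarith
    }
    ultimately show False using a unfolding keyf_def by auto
  qed
next
  assume "r i < r j \<or> (r i = r j \<and> i < j)"
  moreover {
    assume "r i < r j"
    hence "r i * n + n \<le> r j * n" by (metis Suc_leI mult_Suc mult_le_mono1 add.commute)
    hence "keyf n r i < keyf n r j" using assms unfolding keyf_def by linarith
  }
  ultimately show "keyf n r i < keyf n r j" unfolding keyf_def by auto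
qed

lemma keyf_below: "i < n \<Longrightarrow> keyf n r i < K * n \<longleftrightarrow> r i < K"
proof
  assume "i < n" "keyf n r i < K * n"
  thus "r i < K" unfolding keyf_def by (metis add_lessD1 mult_less_cancel2)
next
  assume a: "i < n" "r i < K"
  hence "r i * n + n \<le> K * n" by (metis Suc_leI mult_Suc mult_le_mono1 add.commute)
  thus "keyf n r i < K * n" using a unfolding keyf_def by linarith
qed

definition gg :: "nat \<Rightarrow> nat \<Rightarrow> nat" where
  "gg n i = (if odd i then i - 1 else if i + 1 < n then i + 1 else 0)"

definition blk :: "nat \<Rightarrow> nat \<Rightarrow> nat" where
  "blk n i = (if odd n \<and> i = n - 1 then 0 else i div 2)"

lemma gg_props:
  assumes "n \<ge> 2" "i < n"
  shows "gg n i < n \<and> gg n i \<noteq> i \<and> blk n (gg n i) = blk n i"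
proof (cases "odd i")
  case True
  have "(i - 1) div 2 = i div 2" using True by presburger
  moreover have "i - 1 \<noteq> n - 1" using assms by auto
  moreover have "\<not> (odd n \<and> i = n - 1)" using True assms by presburger
  moreover have "i \<ge> 1" using True by presburger
  ultimately show ?thesis unfolding gg_def blk_def using True assms by auto
next
  case False
  show ?thesis
  proof (cases "i + 1 < n")
    case True
    have "(i + 1) div 2 = i div 2" using False by presburger
    moreover have "\<not> (odd n \<and> i + 1 = n - 1)" using False assms by presburger
    moreover have "\<not> (odd n \<and> i = n - 1)" using False True by auto
    ultimately show ?thesis unfolding gg_def blk_def using True False assms by auto
  next
    case c2: False
    hence "i = n - 1" using assms by auto
    hence "odd n" using False assms by presburger
    moreover have "0 \<noteq> n - 1" using assms by auto
    ultimately show ?thesis unfolding gg_def blk_def using c2 False assms \<open>i = n - 1\<close> by auto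
  qed
qed

definition rks :: "bool \<Rightarrow> bool \<Rightarrow> bool \<Rightarrow> bool \<Rightarrow> nat" where
  "rks t x y z = (if x = y \<and> y \<noteq> z then 4 else if x = y \<and> y = z then (if t then 0 else 3) else if y = z then 2 else 1)"

definition rkt :: "bool \<Rightarrow> bool \<Rightarrow> bool \<Rightarrow> bool \<Rightarrow> nat" where
  "rkt t x y z = (if x = y \<and> y \<noteq> z then 4 else if x = y \<and> y = z then (if t then 2 else 1) else if y = z then 3 else 0)"

lemma rank_agree_all:
  "\<forall>x y z x' y' z' ti tj :: bool. (ti \<longrightarrow> (x = y \<and> y = z)) \<longrightarrow> (tj \<longrightarrow> (x' = y' \<and> y' = z')) \<longrightarrow>
    ((x = y \<and> y = z) \<and> (x' = y' \<and> y' = z') \<longrightarrow> ti = tj) \<longrightarrow>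
    ((x = y \<and> y = z) \<and> (y' = z' \<and> x' \<noteq> y') \<longrightarrow> ti) \<longrightarrow>
    ((x' = y' \<and> y' = z') \<and> (y = z \<and> x \<noteq> y) \<longrightarrow> tj) \<longrightarrow>
    ((x = y \<and> y = z) \<and> (x' = z' \<and> x' \<noteq> y') \<longrightarrow> \<not> ti) \<longrightarrow>
    ((x' = y' \<and> y' = z') \<and> (x = z \<and> x \<noteq> y) \<longrightarrow> \<not> tj) \<longrightarrow>
  (rks tj x' y' z' < rks ti x y z \<longleftrightarrow> rkt tj x' y' z' < rkt ti x y z) \<and>
  (rks tj x' y' z' = rks ti x y z \<longleftrightarrow> rkt tj x' y' z' = rkt ti x y z)"
  unfolding rks_def rkt_def all_bool_eq by simp

lemma rank_agree:
  assumes "ti \<longrightarrow> (x = y \<and> y = z)" "tj \<longrightarrow> (x' = y' \<and> y' = z')"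
    "(x = y \<and> y = z) \<and> (x' = y' \<and> y' = z') \<longrightarrow> ti = tj"
    "(x = y \<and> y = z) \<and> (y' = z' \<and> x' \<noteq> y') \<longrightarrow> ti"
    "(x' = y' \<and> y' = z') \<and> (y = z \<and> x \<noteq> y) \<longrightarrow> tj"
    "(x = y \<and> y = z) \<and> (x' = z' \<and> x' \<noteq> y') \<longrightarrow> \<not> ti"
    "(x' = y' \<and> y' = z') \<and> (x = z \<and> x \<noteq> y) \<longrightarrow> \<not> tj"
  shows "(rks tj x' y' z' < rks ti x y z \<longleftrightarrow> rkt tj x' y' z' < rkt ti x y z) \<and>
         (rks tj x' y' z' = rks ti x y z \<longleftrightarrow> rkt tj x' y' z' = rkt ti x y z)"
  using rank_agree_all[rule_format, of ti x y z tj x' y' z'] assms by blast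

lemma rks_le: "rks t x y z \<le> 4" unfolding rks_def by auto
lemma rkt_le: "rkt t x y z \<le> 4" unfolding rkt_def by auto
lemma rks_4: "rks t x y z = 4 \<longleftrightarrow> x = y \<and> y \<noteq> z" unfolding rks_def by auto
lemma rkt_4: "rkt t x y z = 4 \<longleftrightarrow> x = y \<and> y \<noteq> z" unfolding rkt_def by auto

lemma bit_a: "t \<longrightarrow> (x = y \<and> y = z) \<Longrightarrow> ((x \<noteq> t) \<noteq> (rks t x y z < 1)) = x"
  unfolding rks_def by (cases x; cases y; cases z; cases t) auto
lemma bit_b: "t \<longrightarrow> (x = y \<and> y = z) \<Longrightarrow> ((x \<noteq> t) \<noteq> (rks t x y z < 3)) = y"
  unfolding rks_def by (cases x; cases y; cases z; cases t) auto
lemma bit_c: "t \<longrightarrow> (x = y \<and> y = z) \<Longrightarrow> ((x \<noteq> t) \<noteq> (\<not> rkt t x y z < 2)) = z"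
  unfolding rkt_def by (cases x; cases y; cases z; cases t) auto

lemma core:
  fixes a b c :: "bool list" and n :: nat
  assumes n2: "n \<ge> 2" and len: "length a = n" "length b = n" "length c = n"
    and H1: "\<exists>i<n. a ! i = b ! i \<and> b ! i \<noteq> c ! i"
    and H2: "\<And>i j k. i < n \<Longrightarrow> j < n \<Longrightarrow> k < n \<Longrightarrow> blk n i = blk n j \<Longrightarrow> blk n j = blk n k \<Longrightarrow>
               a ! i = b ! i \<and> b ! i = c ! i \<Longrightarrow> b ! j = c ! j \<and> a ! j \<noteq> b ! j \<Longrightarrow>
               a ! k = c ! k \<and> a ! k \<noteq> b ! k \<Longrightarrow> False"
  shows "\<exists>vs. is_cycle (cube_edges n) vs \<and> a \<in> set vs \<and> b \<in> set vs \<and> c \<in> set vs \<and> rainbow (col (gg n)) vs"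
proof -
  define Tt where "Tt i \<longleftrightarrow> a ! i = b ! i \<and> b ! i = c ! i" for i
  define Aal where "Aal i \<longleftrightarrow> b ! i = c ! i \<and> a ! i \<noteq> b ! i" for i
  define Bal where "Bal i \<longleftrightarrow> a ! i = c ! i \<and> a ! i \<noteq> b ! i" for i
  define Cal where "Cal i \<longleftrightarrow> a ! i = b ! i \<and> b ! i \<noteq> c ! i" for i
  define t where "t i \<longleftrightarrow> Tt i \<and> (\<exists>j<n. blk n j = blk n i \<and> Aal j)" for i
  define rs where "rs i = rks (t i) (a ! i) (b ! i) (c ! i)" for i
  define rt where "rt i = rkt (t i) (a ! i) (b ! i) (c ! i)" for i
  define p where "p = pos n (keyf n rs)"
  define q where "q = pos n (keyf n rt)"
  define h where "h = Max {i. i < n \<and> Cal i}"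
  define w where "w i \<longleftrightarrow> (a ! i \<noteq> t i)" for i
  have tT: "t i \<longrightarrow> (a ! i = b ! i \<and> b ! i = c ! i)" for i unfolding t_def Tt_def by auto
  have hC: "h < n \<and> Cal h" and hmax: "\<And>j. j < n \<Longrightarrow> Cal j \<Longrightarrow> j \<le> h"
  proof -
    have fin: "finite {i. i < n \<and> Cal i}" by auto
    have ne: "{i. i < n \<and> Cal i} \<noteq> {}" using H1 Cal_def by auto
    show "h < n \<and> Cal h" using Max_in[OF fin ne] h_def by auto
    show "\<And>j. j < n \<Longrightarrow> Cal j \<Longrightarrow> j \<le> h" using Max_ge[OF fin] h_def by auto
  qed
  have rs4: "rs i = 4 \<longleftrightarrow> Cal i" for i unfolding rs_def Cal_def using rks_4 by simp
  have rt4: "rt i = 4 \<longleftrightarrow> Cal i" for i unfolding rt_def Cal_def using rkt_4 by simp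
  have hks: "keyf n rs j < keyf n rs h" if "j < n" "j \<noteq> h" for j
  proof -
    have "rs j < rs h \<or> (rs j = rs h \<and> j < h)"
    proof -
      have "rs j \<le> 4" unfolding rs_def by (rule rks_le)
      moreover have "rs h = 4" using rs4 hC by simp
      moreover have "rs j = 4 \<Longrightarrow> j < h" using rs4 hmax[OF that(1)] that by force
      ultimately show ?thesis by linarith
    qed
    thus ?thesis using keyf_lt that hC by blast
  qed
  have hkt: "keyf n rt j < keyf n rt h" if "j < n" "j \<noteq> h" for j
  proof -
    have "rt j < rt h \<or> (rt j = rt h \<and> j < h)"
    proof -
      have "rt j \<le> 4" unfolding rt_def by (rule rkt_le)
      moreover have "rt h = 4" using rt4 hC by simp
      moreover have "rt j = 4 \<Longrightarrow> j < h" using rt4 hmax[OF that(1)] that by force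
      ultimately show ?thesis by linarith
    qed
    thus ?thesis using keyf_lt that hC by blast
  qed
  have agree: "p (gg n i) < p i \<longleftrightarrow> q (gg n i) < q i" if "i < n" for i
  proof -
    define j where "j = gg n i"
    have j: "j < n" "j \<noteq> i" "blk n j = blk n i" using gg_props[OF n2 that] j_def by auto
    have c1: "Tt i \<and> Tt j \<longrightarrow> t i = t j" unfolding t_def using j by auto
    have c2: "Tt i \<and> Aal j \<longrightarrow> t i" unfolding t_def using j by auto
    have c3: "Tt j \<and> Aal i \<longrightarrow> t j" unfolding t_def using j that by auto
    have c4: "Tt i \<and> Bal j \<longrightarrow> \<not> t i"
    proof
      assume a: "Tt i \<and> Bal j"
      show "\<not> t i"
      proof
        assume "t i"
        then obtain k where "k < n" "blk n k = blk n i" "Aal k" unfolding t_def by auto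
        thus False using H2[of i k j] a that j unfolding Tt_def Aal_def Bal_def by auto
      qed
    qed
    have c5: "Tt j \<and> Bal i \<longrightarrow> \<not> t j"
    proof
      assume a: "Tt j \<and> Bal i"
      show "\<not> t j"
      proof
        assume "t j"
        then obtain k where "k < n" "blk n k = blk n j" "Aal k" unfolding t_def by auto
        thus False using H2[of j k i] a that j unfolding Tt_def Aal_def Bal_def by auto
      qed
    qed
    have ra: "(rs j < rs i \<longleftrightarrow> rt j < rt i) \<and> (rs j = rs i \<longleftrightarrow> rt j = rt i)"
      unfolding rs_def rt_def
      by (rule rank_agree[OF tT[of i] tT[of j] c1[unfolded Tt_def] c2[unfolded Tt_def Aal_def]
            c3[unfolded Tt_def Aal_def] c4[unfolded Tt_def Bal_def] c5[unfolded Tt_def Bal_def]])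
    have "p j < p i \<longleftrightarrow> keyf n rs j < keyf n rs i" unfolding p_def using pos_lt_iff j that by blast
    also have "\<dots> \<longleftrightarrow> rs j < rs i \<or> (rs j = rs i \<and> j < i)" using keyf_lt j that by blast
    also have "\<dots> \<longleftrightarrow> rt j < rt i \<or> (rt j = rt i \<and> j < i)" using ra by blast
    also have "\<dots> \<longleftrightarrow> keyf n rt j < keyf n rt i" using keyf_lt j that by blast
    also have "\<dots> \<longleftrightarrow> q j < q i" unfolding q_def using pos_lt_iff j that by blast
    finally show ?thesis unfolding j_def .
  qed
  have st: "sigtau n p q (gg n) h"
    unfolding sigtau_def
  proof (intro conjI allI impI)
    show "2 \<le> n" by (rule n2)
    show "bij_betw p {..<n} {..<n}" unfolding p_def by (rule pos_bij[OF keyf_inj])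
    show "bij_betw q {..<n} {..<n}" unfolding q_def by (rule pos_bij[OF keyf_inj])
    show "h < n" using hC by simp
    show "p h = n - 1" unfolding p_def using pos_max hC hks by blast
    show "q h = n - 1" unfolding q_def using pos_max hC hkt by blast
    fix i assume "i < n"
    thus "gg n i < n" "gg n i \<noteq> i" using gg_props n2 by auto
    show "p (gg n i) < p i \<longleftrightarrow> q (gg n i) < q i" using agree \<open>i < n\<close> by blast
  qed
  interpret S: sigtau n p q w "gg n" h using st unfolding sigtau_def by blast
  have Vn: "S.V k = x" if "length x = n" "\<And>j. j < n \<Longrightarrow> (w j \<noteq> (j \<in> S.F k)) = x ! j" for k x
    by (rule nth_equalityI) (use that S.V_len S.V_nth in auto)
  define Da where "Da = {i. i < n \<and> keyf n rs i < 1 * n}"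
  have Da1: "Da = {i. i < n \<and> p i < card Da}" unfolding p_def using pos_thresh Da_def by blast
  have cDa: "card Da \<le> n" unfolding Da_def by (metis (no_types, lifting) card_lessThan card_mono finite_lessThan lessThan_iff mem_Collect_eq subsetI)
  have FDa: "S.F (card Da) = Da" using Da1 cDa unfolding S.F_def by auto
  have "S.V (card Da) = a"
  proof (rule Vn[OF len(1)])
    fix j assume j: "j < n"
    have "j \<in> Da \<longleftrightarrow> rs j < 1" unfolding Da_def using keyf_below j by blast
    thus "(w j \<noteq> (j \<in> S.F (card Da))) = a ! j" unfolding FDa w_def rs_def using bit_a tT by simp
  qed
  moreover have "card Da < 2 * n" using cDa n2 by simp
  ultimately have ina: "a \<in> set S.vs" using S.in_vs by metis
  define Db where "Db = {i. i < n \<and> keyf n rs i < 3 * n}"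
  have Db1: "Db = {i. i < n \<and> p i < card Db}" unfolding p_def using pos_thresh Db_def by blast
  have cDb: "card Db \<le> n" unfolding Db_def by (metis (no_types, lifting) card_lessThan card_mono finite_lessThan lessThan_iff mem_Collect_eq subsetI)
  have FDb: "S.F (card Db) = Db" using Db1 cDb unfolding S.F_def by auto
  have "S.V (card Db) = b"
  proof (rule Vn[OF len(2)])
    fix j assume j: "j < n"
    have "j \<in> Db \<longleftrightarrow> rs j < 3" unfolding Db_def using keyf_below j by blast
    thus "(w j \<noteq> (j \<in> S.F (card Db))) = b ! j" unfolding FDb w_def rs_def using bit_b tT by simp
  qed
  moreover have "card Db < 2 * n" using cDb n2 by simp
  ultimately have inb: "b \<in> set S.vs" using S.in_vs by metis
  define Dc where "Dc = {i. i < n \<and> 2 * n \<le> keyf n rt i}"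
  have Dc1: "Dc = {i. i < n \<and> n - card Dc \<le> q i}" unfolding q_def using pos_thresh_up Dc_def by blast
  have cDc: "card Dc \<le> n" unfolding Dc_def by (metis (no_types, lifting) card_lessThan card_mono finite_lessThan lessThan_iff mem_Collect_eq subsetI)
  have "h \<in> Dc"
  proof -
    have "rt h = 4" using rt4 hC by simp
    hence "\<not> keyf n rt h < 2 * n" using keyf_below[of h n rt 2] hC by simp
    thus ?thesis unfolding Dc_def using hC by simp
  qed
  hence cDc1: "card Dc \<ge> 1" unfolding Dc_def by (metis One_nat_def Suc_leI card_gt_0_iff empty_iff finite_Collect_conjI finite_lessThan lessThan_def Dc_def)
  define kc where "kc = 2 * n - card Dc"
  have kc: "n \<le> kc" "kc < 2 * n" "kc - n = n - card Dc" using cDc cDc1 kc_def by auto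
  have FDc: "S.F kc = Dc" using Dc1 S.F_hi[OF kc(1)] kc(3) by auto
  have "S.V kc = c"
  proof (rule Vn[OF len(3)])
    fix j assume j: "j < n"
    have "j \<in> Dc \<longleftrightarrow> \<not> rt j < 2" unfolding Dc_def using keyf_below[of j n rt 2] j by auto
    thus "(w j \<noteq> (j \<in> S.F kc)) = c ! j" unfolding FDc w_def rt_def using bit_c tT by simp
  qed
  hence inc: "c \<in> set S.vs" using S.in_vs kc(2) by metis
  show ?thesis using S.is_cyc S.rainbow_vs ina inb inc by blast
qed

lemma blk3:
  assumes "i < n" "j < n" "k < n" "i \<noteq> j" "j \<noteq> k" "i \<noteq> k" "blk n i = blk n j" "blk n j = blk n k"
  shows "i \<in> {0, 1, n - 1} \<and> j \<in> {0, 1, n - 1} \<and> k \<in> {0, 1, n - 1}"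
  using assms unfolding blk_def by (auto split: if_splits; presburger)

definition T3 :: "bool list \<Rightarrow> bool list \<Rightarrow> bool list \<Rightarrow> nat \<Rightarrow> bool" where
  "T3 x y z i \<longleftrightarrow> x ! i = y ! i \<and> y ! i = z ! i"

lemma T3_perm: "T3 y z x i = T3 x y z i" "T3 x z y i = T3 x y z i" unfolding T3_def by auto

lemma three_core:
  fixes a b c :: "bool list"
  assumes n2: "n \<ge> 2" and len: "length a = n" "length b = n" "length c = n"
    and i0: "i0 < n" "a ! i0 = b ! i0" "b ! i0 \<noteq> c ! i0"
    and KP: "\<And>i j k. i < n \<Longrightarrow> j < n \<Longrightarrow> k < n \<Longrightarrow> i \<noteq> j \<Longrightarrow> j \<noteq> k \<Longrightarrow> i \<noteq> k \<Longrightarrow>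
      blk n i = blk n j \<Longrightarrow> blk n j = blk n k \<Longrightarrow> T3 a b c i \<Longrightarrow> \<not> T3 a b c j \<Longrightarrow> \<not> T3 a b c k \<Longrightarrow>
      i0 = j \<or> i0 = k"
  shows "\<exists>vs. is_cycle (cube_edges n) vs \<and> a \<in> set vs \<and> b \<in> set vs \<and> c \<in> set vs \<and> rainbow (col (gg n)) vs"
proof (rule core[OF n2 len])
  show "\<exists>i<n. a ! i = b ! i \<and> b ! i \<noteq> c ! i" using i0 by blast
next
  fix i j k
  assume h: "i < n" "j < n" "k < n" "blk n i = blk n j" "blk n j = blk n k"
    "a ! i = b ! i \<and> b ! i = c ! i" "b ! j = c ! j \<and> a ! j \<noteq> b ! j" "a ! k = c ! k \<and> a ! k \<noteq> b ! k"
  have d: "i \<noteq> j" "j \<noteq> k" "i \<noteq> k" using h by auto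
  have "i0 = j \<or> i0 = k" using KP[OF h(1-3) d h(4,5)] h unfolding T3_def by auto
  thus False using i0 h by auto
qed

lemma exists_diff:
  assumes "length x = n" "length y = n" "x \<noteq> y" shows "\<exists>i<n. x ! i \<noteq> y ! i"
  using assms nth_equalityI by metis

lemma three:
  assumes n2: "n \<ge> 2" and V: "x \<in> cube_verts n" "y \<in> cube_verts n" "z \<in> cube_verts n"
    and d: "x \<noteq> y" "y \<noteq> z" "x \<noteq> z"
  shows "\<exists>vs. is_cycle (cube_edges n) vs \<and> {x, y, z} \<subseteq> set vs \<and> rainbow (col (gg n)) vs"
proof -
  have len: "length x = n" "length y = n" "length z = n" using V unfolding cube_verts_def by auto
  define T where "T i = T3 x y z i" for i
  obtain i1 where i1: "i1 < n" "\<not> T i1" using exists_diff[OF len(1,2) d(1)] unfolding T_def T3_def by auto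
  define i0 where "i0 = (if \<not> T 0 then 0 else if \<not> T 1 then 1 else if \<not> T (n - 1) then n - 1 else (SOME i. i < n \<and> \<not> T i))"
  have i0: "i0 < n \<and> \<not> T i0"
  proof -
    have "(SOME i. i < n \<and> \<not> T i) < n \<and> \<not> T (SOME i. i < n \<and> \<not> T i)" using i1 by (metis (mono_tags, lifting) someI)
    thus ?thesis unfolding i0_def using n2 by auto
  qed
  have KP: "i0 = j \<or> i0 = k" if "i < n" "j < n" "k < n" "i \<noteq> j" "j \<noteq> k" "i \<noteq> k"
      "blk n i = blk n j" "blk n j = blk n k" "T i" "\<not> T j" "\<not> T k" for i j k
  proof -
    have B: "i \<in> {0, 1, n - 1} \<and> j \<in> {0, 1, n - 1} \<and> k \<in> {0, 1, n - 1}" using blk3 that by blast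
    show ?thesis
    proof (cases "T 0")
      case False
      hence "i0 = 0" unfolding i0_def by simp
      moreover have "0 \<noteq> i" using False \<open>T i\<close> by metis
      moreover have "0 \<in> {i, j, k}"
        using B that n2 by auto
      ultimately show ?thesis by auto
    next
      case T0: True
      show ?thesis
      proof (cases "T 1")
        case False
        hence "i0 = 1" unfolding i0_def using T0 by simp
        moreover have "1 \<noteq> i" using False \<open>T i\<close> by metis
        moreover have "1 \<in> {i, j, k}" using B that n2 by auto
        ultimately show ?thesis by auto
      next
        case T1: True
        have "j \<noteq> 0" "j \<noteq> 1" "k \<noteq> 0" "k \<noteq> 1" using T0 T1 \<open>\<not> T j\<close> \<open>\<not> T k\<close> by metis+
        hence "j = n - 1" "k = n - 1" using B by auto
        thus ?thesis using that by simp
      qed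
    qed
  qed
  have cases: "(x ! i0 = y ! i0 \<and> y ! i0 \<noteq> z ! i0) \<or> (y ! i0 = z ! i0 \<and> z ! i0 \<noteq> x ! i0) \<or> (x ! i0 = z ! i0 \<and> z ! i0 \<noteq> y ! i0)"
    using i0 unfolding T_def T3_def by auto
  have KP3: "i0 = j \<or> i0 = k" if "i < n" "j < n" "k < n" "i \<noteq> j" "j \<noteq> k" "i \<noteq> k"
      "blk n i = blk n j" "blk n j = blk n k" "T3 x y z i" "\<not> T3 x y z j" "\<not> T3 x y z k" for i j k
    using KP[OF that(1-8)] that(9-11) unfolding T_def by blast
  have i0n: "i0 < n" using i0 by simp
  show ?thesis
  proof -
    { assume c: "x ! i0 = y ! i0 \<and> y ! i0 \<noteq> z ! i0"
      have "\<exists>vs. is_cycle (cube_edges n) vs \<and> x \<in> set vs \<and> y \<in> set vs \<and> z \<in> set vs \<and> rainbow (col (gg n)) vs"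
        by (rule three_core[OF n2 len(1,2,3) i0n]) (use c KP3 in auto)
      hence ?thesis by auto }
    moreover
    { assume c: "y ! i0 = z ! i0 \<and> z ! i0 \<noteq> x ! i0"
      have "\<exists>vs. is_cycle (cube_edges n) vs \<and> y \<in> set vs \<and> z \<in> set vs \<and> x \<in> set vs \<and> rainbow (col (gg n)) vs"
        by (rule three_core[OF n2 len(2,3,1) i0n]) (use c KP3 in \<open>auto simp: T3_perm\<close>)
      hence ?thesis by auto }
    moreover
    { assume c: "x ! i0 = z ! i0 \<and> z ! i0 \<noteq> y ! i0"
      have "\<exists>vs. is_cycle (cube_edges n) vs \<and> x \<in> set vs \<and> z \<in> set vs \<and> y \<in> set vs \<and> rainbow (col (gg n)) vs"
        by (rule three_core[OF n2 len(1,3,2) i0n]) (use c KP3 in \<open>auto simp: T3_perm\<close>)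
      hence ?thesis by auto }
    ultimately show ?thesis using cases by blast
  qed
qed

definition fl :: "nat \<Rightarrow> bool list \<Rightarrow> bool list" where "fl i x = x[i := \<not> x ! i]"

lemma fl_len[simp]: "length (fl i x) = length x" unfolding fl_def by simp
lemma fl_nth: "j < length x \<Longrightarrow> fl i x ! j = (if j = i then \<not> x ! i else x ! j)"
  unfolding fl_def by (simp add: nth_list_update)

lemma dset_fl: assumes "length x = n" "i < n" shows "dset x (fl i x) n = {i}"
  using assms unfolding dset_def by (auto simp: fl_nth split: if_splits)

lemma partA_upper:
  assumes n2: "n \<ge> 2" and v: "v \<in> cube_verts n"
  shows "\<exists>vs. is_cycle (cube_edges n) vs \<and> v \<in> set vs \<and>
     rainbow (\<lambda>e. if dir e < 2 then col (gg n) e else 0) vs"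
proof -
  define c where "c e = (if dir e < 2 then col (gg n) e else 0)" for e
  have lv: "length v = n" using v unfolding cube_verts_def by simp
  define v1 where "v1 = fl 0 v"
  define v2 where "v2 = fl 1 v1"
  define v3 where "v3 = fl 1 v"
  have l: "length v1 = n" "length v2 = n" "length v3 = n" using lv unfolding v1_def v2_def v3_def by auto
  have n01: "0 < n" "1 < n" using n2 by auto
  have g0: "gg n 0 = 1" "gg n 1 = 0" unfolding gg_def using n2 by auto
  have d1: "dset v v1 n = {0}" unfolding v1_def using dset_fl lv n01 by simp
  have d2: "dset v1 v2 n = {1}" unfolding v2_def using dset_fl l n01 by simp
  have d3: "dset v2 v3 n = {0}"
  proof -
    have "v3 = fl 0 v2"
      by (rule nth_equalityI) (use l lv n01 in \<open>auto simp: v1_def v2_def v3_def fl_nth\<close>)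
    thus ?thesis using dset_fl l n01 by simp
  qed
  have d4: "dset v3 v n = {1}"
  proof -
    have "v = fl 1 v3" unfolding v3_def fl_def using n01 lv by simp
    thus ?thesis using dset_fl l n01 by simp
  qed
  define vs where "vs = [v, v1, v2, v3]"
  have nth: "vs ! 0 = v" "vs ! 1 = v1" "vs ! 2 = v2" "vs ! 3 = v3" unfolding vs_def by (simp_all add: numeral_eq_Suc)
  have b0: "v1 ! 0 = (\<not> v ! 0)" "v1 ! 1 = v ! 1" "v2 ! 0 = (\<not> v ! 0)" "v2 ! 1 = (\<not> v ! 1)"
    "v3 ! 0 = v ! 0" "v3 ! 1 = (\<not> v ! 1)"
    unfolding v1_def v2_def v3_def using lv n01 by (auto simp: fl_nth)
  have "v \<noteq> v1" "v \<noteq> v2" "v \<noteq> v3" "v1 \<noteq> v2" "v1 \<noteq> v3" "v2 \<noteq> v3"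
    using b0 by (metis (full_types))+
  hence dist: "distinct vs" unfolding vs_def by simp
  have E: "{vs ! i, vs ! ((i + 1) mod length vs)} \<in> cube_edges n \<and>
           c {vs ! i, vs ! ((i + 1) mod length vs)} = [if v ! 1 then 1 else 0, 2 + (if \<not> v ! 0 then 1 else 0),
              (if \<not> v ! 1 then 1 else 0), 2 + (if v ! 0 then 1 else 0)] ! i" if "i < 4" for i
  proof -
    have ii: "i = 0 \<or> i = 1 \<or> i = 2 \<or> i = 3" using that by auto
    have m: "length vs = 4" unfolding vs_def by simp
    have c1: "c {v, v1} = (if v ! 1 then 1 else 0)" unfolding c_def
      using col_edge[OF lv l(1) d1] dir_eq[OF lv l(1) d1] g0 n01 by simp
    have c2: "c {v1, v2} = 2 + (if \<not> v ! 0 then 1 else 0)" unfolding c_def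
      using col_edge[OF l(1) l(2) d2] dir_eq[OF l(1) l(2) d2] g0 n01 b0 by simp
    have c3: "c {v2, v3} = (if \<not> v ! 1 then 1 else 0)" unfolding c_def
      using col_edge[OF l(2) l(3) d3] dir_eq[OF l(2) l(3) d3] g0 n01 b0 by simp
    have c4: "c {v3, v} = 2 + (if v ! 0 then 1 else 0)" unfolding c_def
      using col_edge[OF l(3) lv d4] dir_eq[OF l(3) lv d4] g0 n01 b0 by simp
    have e1: "{v, v1} \<in> cube_edges n" using cube_edgeI lv l d1 by simp
    have e2: "{v1, v2} \<in> cube_edges n" using cube_edgeI lv l d2 by simp
    have e3: "{v2, v3} \<in> cube_edges n" using cube_edgeI lv l d3 by simp
    have e4: "{v3, v} \<in> cube_edges n" using cube_edgeI lv l d4 by simp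
    show ?thesis using ii
    proof (elim disjE)
      assume "i = 0" thus ?thesis using nth m c1 e1 by simp
    next
      assume i1: "i = 1"
      have "(i + 1) mod length vs = 2" using i1 m by simp
      hence A: "vs ! i = v1" "vs ! ((i + 1) mod length vs) = v2" using nth i1 by simp_all
      show ?thesis unfolding A using c2 e2 i1 by simp
    next
      assume i1: "i = 2"
      have "(i + 1) mod length vs = 3" using i1 m by simp
      hence A: "vs ! i = v2" "vs ! ((i + 1) mod length vs) = v3" using nth i1 by simp_all
      show ?thesis unfolding A using c3 e3 i1 by simp
    next
      assume i1: "i = 3"
      have "(i + 1) mod length vs = 0" using i1 m by simp
      hence A: "vs ! i = v3" "vs ! ((i + 1) mod length vs) = v" using nth i1 by simp_all
      show ?thesis unfolding A using c4 e4 i1 by simp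
    qed
  qed
  have cyc: "is_cycle (cube_edges n) vs" unfolding is_cycle_def using dist E by (auto simp: vs_def)
  have "inj_on c (cycle_edges vs)"
  proof (rule inj_onI)
    fix e e' assume ee: "e \<in> cycle_edges vs" "e' \<in> cycle_edges vs" and ce: "c e = c e'"
    have m4: "length vs = 4" unfolding vs_def by simp
    obtain i where i: "i < length vs" "e = {vs ! i, vs ! ((i + 1) mod length vs)}"
      using ee(1) unfolding cycle_edges_def by blast
    obtain j where j: "j < length vs" "e' = {vs ! j, vs ! ((j + 1) mod length vs)}"
      using ee(2) unfolding cycle_edges_def by blast
    have ij: "i < 4" "j < 4" "e = {vs ! i, vs ! ((i + 1) mod length vs)}" "e' = {vs ! j, vs ! ((j + 1) mod length vs)}"
      using i j m4 by auto
    have "[if v ! 1 then 1 else 0, 2 + (if \<not> v ! 0 then 1 else 0),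
              (if \<not> v ! 1 then 1 else 0), 2 + (if v ! 0 then 1 else (0::nat))] ! i =
          [if v ! 1 then 1 else 0, 2 + (if \<not> v ! 0 then 1 else 0),
              (if \<not> v ! 1 then 1 else 0), 2 + (if v ! 0 then 1 else (0::nat))] ! j"
      using E[OF ij(1)] E[OF ij(2)] ce ij by simp
    moreover have "i = 0 \<or> i = 1 \<or> i = 2 \<or> i = 3" "j = 0 \<or> j = 1 \<or> j = 2 \<or> j = 3" using ij by auto
    ultimately have "i = j" by (elim disjE) (simp_all split: if_splits)
    thus "e = e'" using ij by simp
  qed
  hence "rainbow c vs" unfolding rainbow_def .
  thus ?thesis using cyc unfolding c_def vs_def by auto
qed

lemma partA:
  assumes n2: "n \<ge> 2" shows "crx (cube_verts n) (cube_edges n) 1 = 4"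
proof (rule crx_eq)
  let ?c = "\<lambda>e. if dir e < 2 then col (gg n) e else 0"
  show "\<exists>c. (\<forall>e\<in>cube_edges n. c e < 4) \<and> (\<forall>S. S \<subseteq> cube_verts n \<and> card S = 1 \<longrightarrow>
          (\<exists>vs. is_cycle (cube_edges n) vs \<and> S \<subseteq> set vs \<and> rainbow c vs))"
  proof (intro exI[of _ ?c] conjI ballI allI impI)
    fix e assume "e \<in> cube_edges n"
    show "?c e < 4" unfolding col_def by auto
  next
    fix S assume S: "S \<subseteq> cube_verts n \<and> card S = 1"
    then obtain v where "S = {v}" using card_1_singletonE by blast
    thus "\<exists>vs. is_cycle (cube_edges n) vs \<and> S \<subseteq> set vs \<and> rainbow ?c vs" using partA_upper[OF n2, of v] S by auto
  qed
  show "{replicate n False} \<subseteq> cube_verts n" unfolding cube_verts_def by simp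
  show "card {replicate n False} = 1" by simp
  fix vs assume "is_cycle (cube_edges n) vs" thus "4 \<le> length vs" by (rule cube_cycle_len4)
qed

lemma card_ge4: "n \<ge> 2 \<Longrightarrow> card (cube_verts n) \<ge> 4"
  using card_cube[of n] power_increasing[of 2 n "2::nat"] by simp

lemma partB_col:
  assumes n2: "n \<ge> 2" and k: "k = 2 \<or> k = 3"
  shows "\<exists>c. (\<forall>e\<in>cube_edges n. c e < 2 * n) \<and> (\<forall>S. S \<subseteq> cube_verts n \<and> card S = k \<longrightarrow>
          (\<exists>vs. is_cycle (cube_edges n) vs \<and> S \<subseteq> set vs \<and> rainbow c vs))"
proof (intro exI[of _ "col (gg n)"] conjI ballI allI impI)
  fix e assume "e \<in> cube_edges n" thus "col (gg n) e < 2 * n" by (rule col_bound)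
next
  fix S assume S: "S \<subseteq> cube_verts n \<and> card S = k"
  show "\<exists>vs. is_cycle (cube_edges n) vs \<and> S \<subseteq> set vs \<and> rainbow (col (gg n)) vs"
  proof (cases "k = 3")
    case True
    then obtain x y z where "S = {x, y, z}" "x \<noteq> y" "y \<noteq> z" "x \<noteq> z" using S card_3_iff by metis
    thus ?thesis using three[OF n2] S by auto
  next
    case False
    hence "card S = 2" using k S by auto
    then obtain x y where xy: "S = {x, y}" "x \<noteq> y" using card_2_iff by metis
    have "card S < card (cube_verts n)" using card_ge4[OF n2] \<open>card S = 2\<close> by simp
    have "\<not> cube_verts n \<subseteq> S" using \<open>card S < card (cube_verts n)\<close> S card_mono
      by (metis finite_cube finite_subset not_le)
    then obtain z where z: "z \<in> cube_verts n" "z \<notin> S" by blast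
    obtain vs where "is_cycle (cube_edges n) vs" "{x, y, z} \<subseteq> set vs" "rainbow (col (gg n)) vs"
      using three[OF n2, of x y z] S xy z by auto
    thus ?thesis using xy by auto
  qed
qed

lemma partB:
  assumes n2: "n \<ge> 2" and k: "k = 2 \<or> k = 3"
  shows "crx (cube_verts n) (cube_edges n) k = 2 * n"
proof -
  define z where "z = replicate n False"
  define on where "on = replicate n True"
  define t where "t = True # replicate (n - 1) False"
  have bits: "z ! 0 = False" "on ! 0 = True" "t ! 0 = True" "on ! 1 = True" "t ! 1 = False"
    using n2 by (simp_all add: z_def on_def t_def nth_Cons')
  have zo: "z \<noteq> on" "z \<noteq> t" "on \<noteq> t" using bits by metis+
  define S0 where "S0 = (if k = 2 then {z, on} else {z, on, t})"
  show ?thesis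
  proof (rule crx_eq[OF partB_col[OF n2 k]])
    show "S0 \<subseteq> cube_verts n" unfolding S0_def z_def on_def t_def cube_verts_def using n2 by auto
    show "card S0 = k" unfolding S0_def using zo k by auto
    fix vs assume c: "is_cycle (cube_edges n) vs" "S0 \<subseteq> set vs"
    have "z \<in> set vs" "on \<in> set vs" using c(2) unfolding S0_def by (auto split: if_splits)
    moreover have "\<forall>j<n. z ! j \<noteq> on ! j" unfolding z_def on_def by simp
    ultimately show "2 * n \<le> length vs" using antipodal_len[OF c(1)] n2 by simp
  qed
qed

lemma partC:
  assumes n2: "n \<ge> 2" and k: "2 ^ (n - 1) \<le> k" "k \<le> 2 ^ n"
  shows "crx (cube_verts n) (cube_edges n) k = 2 ^ n"
proof -
  have gc: "is_cycle (cube_edges n) (gray n)" using gray_cycle[OF n2] .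
  obtain c where c: "\<forall>e\<in>cube_edges n. c e < length (gray n)" "rainbow c (gray n)"
    using index_colouring[OF gc] by blast
  have cE: "card (Ev n) = 2 ^ (n - 1)"
  proof -
    have "2 * card (Ev n) = 2 * 2 ^ (n - 1)" using card_Ev[of n] n2 power_Suc[of 2 "n - 1"] by simp
    thus ?thesis by simp
  qed
  have EvV: "Ev n \<subseteq> cube_verts n" unfolding Ev_def by auto
  have "card (cube_verts n - Ev n) = 2 ^ n - 2 ^ (n - 1)" using card_Diff_subset[OF _ EvV] cE card_cube
    by (metis finite_cube finite_subset EvV)
  hence "k - card (Ev n) \<le> card (cube_verts n - Ev n)" using k cE by simp
  then obtain T where T: "T \<subseteq> cube_verts n - Ev n" "card T = k - card (Ev n)" "finite T"
    by (rule obtain_subset_with_card_n)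
  define S0 where "S0 = Ev n \<union> T"
  show ?thesis
  proof (rule crx_eq)
    show "\<exists>c. (\<forall>e\<in>cube_edges n. c e < 2 ^ n) \<and> (\<forall>S. S \<subseteq> cube_verts n \<and> card S = k \<longrightarrow>
          (\<exists>vs. is_cycle (cube_edges n) vs \<and> S \<subseteq> set vs \<and> rainbow c vs))"
      using c gc gray_set[of n] gray_len[of n] by (intro exI[of _ c]) auto
    show "S0 \<subseteq> cube_verts n" unfolding S0_def using T EvV by auto
    have "finite (Ev n)" using EvV finite_cube finite_subset by blast
    moreover have "Ev n \<inter> T = {}" using T by auto
    ultimately show "card S0 = k" unfolding S0_def using T cE k card_Un_disjoint by (metis le_add_diff_inverse)
    fix vs assume "is_cycle (cube_edges n) vs" "S0 \<subseteq> set vs"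
    hence "2 * card (Ev n) \<le> length vs" using ham_lower S0_def by blast
    thus "2 ^ n \<le> length vs" using card_Ev n2 by simp
  qed
qed

theorem theorem3p6:
  fixes n :: nat
  assumes "n \<ge> 2"
  shows "crx (cube_verts n) (cube_edges n) 1 = 4 \<and>
         crx (cube_verts n) (cube_edges n) 2 = 2 * n \<and>
         crx (cube_verts n) (cube_edges n) 3 = 2 * n \<and>
         (\<forall>k. 2 ^ (n - 1) \<le> k \<and> k \<le> 2 ^ n \<longrightarrow> crx (cube_verts n) (cube_edges n) k = 2 ^ n)"
  using partA[OF assms] partB[OF assms] partC[OF assms] by auto

end
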